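(* Let $m,n$ be positive integers, $A\in\mathbb{C}^{n\times n}$, $B\in\mathbb{C}^{n\times m}$ with $\operatorname{rank}(B)=m$, $(A,B)$ reachable and all eigenvalues of $A$ of modulus $<1$. Let $\mathbf{R}\in\mathbb{C}^{n\times n}$ be Hermitian with $\mathbf{R}\geq0$ and $\mathbf{R}-A\mathbf{R}A^*=BH+H^*B^*$ for some $H\in\mathbb{C}^{m\times n}$. Let $\Omega$ be the $\mathbb{H}_m$-minimal value of $q_{\mathbf{R}}(\Gamma)=\Gamma\mathbf{R}\Gamma^*$ over $\Gamma\in\mathbb{C}^{m\times n}$ subject to $\Gamma B=I_m$. If $\Omega>0$ then $\mathbf{R}>0$.
   Context: $\mathbb{H}_m$ is the space of $m\times m$ Hermitian matrices partially ordered by $X\geq Y$ iff $X-Y$ is nonnegative definite. The $\mathbb{H}_m$-minimal value is $q_{\mathbf{R}}(\Gamma_0)$ for some $\Gamma_0$ with $\Gamma_0B=I_m$ and $q_{\mathbf{R}}(\Gamma_0)\leq q_{\mathbf{R}}(\Gamma)$ for all $\Gamma$ with $\Gamma B=I_m$ (such a least element exists). $(A,B)$ reachable means $\operatorname{rank}[B,AB,\dots,A^{n-1}B]=n$. *)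

theory Defs
  imports "HOL-Analysis.Analysis"
begin

definition cadj :: "complex^'c^'r \<Rightarrow> complex^'r^'c" where
  "cadj X = (\<chi> i j. cnj (X $ j $ i))"

definition hermitian :: "complex^'n^'n \<Rightarrow> bool" where
  "hermitian X \<longleftrightarrow> cadj X = X"

definition qform :: "complex^'n^'n \<Rightarrow> complex^'n \<Rightarrow> complex" where
  "qform X x = (\<Sum>i\<in>UNIV. cnj (x $ i) * (X *v x) $ i)"

definition psd :: "complex^'n^'n \<Rightarrow> bool" where
  "psd X \<longleftrightarrow> hermitian X \<and> (\<forall>x. Re (qform X x) \<ge> 0)"

definition pd :: "complex^'n^'n \<Rightarrow> bool" where
  "pd X \<longleftrightarrow> hermitian X \<and> (\<forall>x. x \<noteq> 0 \<longrightarrow> Re (qform X x) > 0)"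

definition loewner_le :: "complex^'n^'n \<Rightarrow> complex^'n^'n \<Rightarrow> bool" where
  "loewner_le X Y \<longleftrightarrow> hermitian X \<and> hermitian Y \<and> psd (Y - X)"

definition mpow :: "complex^'n^'n \<Rightarrow> nat \<Rightarrow> complex^'n^'n" where
  "mpow A k = (((**) A) ^^ k) (mat 1)"

definition idx :: "'n::finite \<Rightarrow> nat" where
  "idx = (SOME f. bij_betw f (UNIV::'n set) {..<CARD('n)})"

(* reachability matrix [B, AB, ..., A^(n-1) B]; column (j,k) is column j of A^(idx k) B *)
definition ctrb :: "complex^'n^'n \<Rightarrow> complex^'m^'n \<Rightarrow> complex^('m \<times> 'n)^'n" where
  "ctrb A B = (\<chi> i jk. (mpow A (idx (snd jk)) ** B) $ i $ fst jk)"

definition reachable :: "complex^'n^'n \<Rightarrow> complex^'m^'n \<Rightarrow> bool" where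
  "reachable A B \<longleftrightarrow> rank (ctrb A B) = CARD('n)"

definition qR :: "complex^'n^'n \<Rightarrow> complex^'n^'m \<Rightarrow> complex^'m^'m" where
  "qR R G = G ** R ** cadj G"

end

theory Submission
  imports Defs
begin


definition ci :: "complex^'n \<Rightarrow> complex^'n \<Rightarrow> complex" where
  "ci x y = (\<Sum>i\<in>UNIV. cnj (x $ i) * y $ i)"

lemma qform_ci: "qform X x = ci x (X *v x)"
  by (simp add: qform_def ci_def)

lemma ci_adj: "ci x (M *v y) = ci (cadj M *v x) y"
proof -
  have "ci x (M *v y) = (\<Sum>i\<in>UNIV. \<Sum>j\<in>UNIV. cnj (x $ i) * M $ i $ j * y $ j)"
    by (simp add: ci_def matrix_vector_mult_def sum_distrib_left mult.assoc)
  also have "\<dots> = (\<Sum>j\<in>UNIV. \<Sum>i\<in>UNIV. cnj (x $ i) * M $ i $ j * y $ j)"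
    by (rule sum.swap)
  also have "\<dots> = ci (cadj M *v x) y"
    by (simp add: ci_def matrix_vector_mult_def cadj_def sum_distrib_right sum_distrib_left mult.commute mult.left_commute)
  finally show ?thesis .
qed

lemma ci_add_right: "ci x (y + z) = ci x y + ci x z"
  by (simp add: ci_def distrib_left sum.distrib)
lemma ci_add_left: "ci (x + y) z = ci x z + ci y z"
  by (simp add: ci_def distrib_right sum.distrib)
lemma ci_diff_right: "ci x (y - z) = ci x y - ci x z"
  by (simp add: ci_def right_diff_distrib sum_subtractf)
lemma ci_scale_right: "ci x (c *s y) = c * ci x y"
  by (simp add: ci_def sum_distrib_left mult.left_commute)
lemma ci_scale_left: "ci (c *s x) y = cnj c * ci x y"
  by (simp add: ci_def sum_distrib_left mult.assoc)
lemma ci_zero_right[simp]: "ci x 0 = 0"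
  by (simp add: ci_def)
lemma ci_zero_left[simp]: "ci 0 x = 0"
  by (simp add: ci_def)
lemma ci_cnj: "cnj (ci x y) = ci y x"
  by (simp add: ci_def mult.commute)

lemma ci_self_Re: "Re (ci x x) = (\<Sum>i\<in>UNIV. (cmod (x $ i))^2)"
  by (simp add: ci_def Re_sum complex_norm_square[symmetric] mult.commute del: of_real_power)

lemma ci_self_zero: "Re (ci x x) = 0 \<Longrightarrow> x = 0"
proof -
  assume "Re (ci x x) = 0"
  then have "(\<Sum>i\<in>UNIV. (cmod (x $ i))^2) = 0" by (simp add: ci_self_Re)
  then have "\<forall>i\<in>UNIV. (cmod (x $ i))^2 = 0"
    by (subst (asm) sum_nonneg_eq_0_iff) auto
  then show "x = 0" by (simp add: vec_eq_iff)
qed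

lemma ci_self_pos: "x \<noteq> 0 \<Longrightarrow> Re (ci x x) > 0"
proof -
  assume "x \<noteq> 0"
  have "Re (ci x x) \<ge> 0" by (simp add: ci_self_Re sum_nonneg)
  with ci_self_zero[of x] \<open>x \<noteq> 0\<close> show ?thesis by fastforce
qed

lemma cadj_cadj[simp]: "cadj (cadj M) = M"
  by (simp add: cadj_def vec_eq_iff)

lemma cadj_mult: "cadj (M ** N) = cadj N ** cadj M"
  by (simp add: cadj_def vec_eq_iff matrix_matrix_mult_def mult.commute)

lemma cadj_mat1[simp]: "cadj (mat 1) = mat 1"
  by (simp add: cadj_def vec_eq_iff mat_def)

lemma cadj_add: "cadj (M + N) = cadj M + cadj N"
  by (simp add: cadj_def vec_eq_iff)

lemma qform_diff: "qform (X - Y) x = qform X x - qform Y x"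
  by (simp add: qform_ci matrix_vector_mult_diff_rdistrib ci_diff_right)

lemma psd_kernel:
  assumes P: "psd R" and q: "Re (qform R x) = 0"
  shows "R *v x = 0"
proof -
  have herm: "cadj R = R" using P by (simp add: psd_def hermitian_def)
  define y where "y = R *v x"
  define \<alpha> where "\<alpha> = Re (ci y y)"
  define b where "b = Re (ci y (R *v y))"
  have a0: "\<alpha> \<ge> 0" unfolding \<alpha>_def by (simp add: ci_self_Re sum_nonneg)
  have b0: "b \<ge> 0" using P unfolding b_def psd_def by (simp add: qform_ci)
  have key: "Re (qform R (x + complex_of_real t *s y)) = 2 * t * \<alpha> + t^2 * b" for t :: real
  proof -
    have e1: "ci x (R *v y) = cnj (ci y y)"
      by (metis ci_adj ci_cnj herm y_def)
    have "qform R (x + complex_of_real t *s y) =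
        ci x (R *v x) + complex_of_real t * ci x (R *v y) + complex_of_real t * ci y (R *v x)
        + complex_of_real t * complex_of_real t * ci y (R *v y)"
      by (simp add: qform_ci matrix_vector_right_distrib matrix_vector_mult_scaleR
          ci_add_left ci_add_right ci_scale_left ci_scale_right algebra_simps
          vector_scalar_commute)
    then show ?thesis using q
      by (simp add: e1 qform_ci y_def[symmetric] \<alpha>_def b_def power2_eq_square)
  qed
  have "\<alpha> = 0"
  proof (rule ccontr)
    assume "\<alpha> \<noteq> 0"
    with a0 have ap: "\<alpha> > 0" by simp
    define t where "t = - \<alpha> / (b + 1)"
    have tn: "t < 0" using ap b0 by (simp add: t_def)
    have "b / (b + 1) < 1" using b0 by simp
    then have "b / (b + 1) < 2" by simp
    then have "\<alpha> * (b / (b + 1)) < \<alpha> * 2" using ap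
      by (rule mult_strict_left_mono)
    then have "2 * \<alpha> + t * b > 0" by (simp add: t_def)
    then have "t * (2 * \<alpha> + t * b) < 0" using tn by (simp add: mult_neg_pos)
    then have "2 * t * \<alpha> + t^2 * b < 0" by (simp add: algebra_simps power2_eq_square)
    then have "Re (qform R (x + complex_of_real t *s y)) < 0" by (simp add: key)
    with P show False by (simp add: psd_def) (meson not_le)
  qed
  then show ?thesis using ci_self_zero[of y] \<alpha>_def y_def by simp
qed

lemma mm_add_r: "((A::complex^'b^'a) + B) ** C = A ** C + B ** C"
  by (simp add: vec_eq_iff matrix_matrix_mult_def distrib_right sum.distrib)
lemma mv_add_r: "((A::complex^'b^'a) + B) *v x = A *v x + B *v x"
  by (simp add: vec_eq_iff matrix_vector_mult_def distrib_right sum.distrib)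
lemma mv_add_l: "(A::complex^'b^'a) *v (x + y) = A *v x + A *v y"
  by (simp add: vec_eq_iff matrix_vector_mult_def distrib_left sum.distrib)
lemma mv_diff_l: "(A::complex^'b^'a) *v (x - y) = A *v x - A *v y"
  by (simp add: vec_eq_iff matrix_vector_mult_def right_diff_distrib sum_subtractf)
lemma mv_diff_r: "((A::complex^'b^'a) - B) *v x = A *v x - B *v x"
  by (simp add: vec_eq_iff matrix_vector_mult_def left_diff_distrib sum_subtractf)
lemma mv_scale: "(A::complex^'b^'a) *v (c *s x) = c *s (A *v x)"
  by (simp add: vec_eq_iff matrix_vector_mult_def sum_distrib_left mult.left_commute)

definition outer :: "complex^'m \<Rightarrow> complex^'n \<Rightarrow> complex^'n^'m" where
  "outer w e = (\<chi> i j. w $ i * cnj (e $ j))"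

lemma outer_mult: "outer w e ** B = outer w (cadj B *v e)"
  by (simp add: outer_def vec_eq_iff matrix_matrix_mult_def cadj_def matrix_vector_mult_def
      sum_distrib_left mult.assoc mult.commute mult.left_commute)

lemma outer_zero[simp]: "outer w 0 = 0"
  by (simp add: outer_def vec_eq_iff)

lemma cadj_outer_mv: "cadj (outer w e) *v v = ci w v *s e"
  by (simp add: outer_def vec_eq_iff cadj_def matrix_vector_mult_def ci_def
      sum_distrib_left sum_distrib_right mult.commute mult.left_commute)

lemma ker_B:
  fixes B :: "complex^'m^'n" and R :: "complex^'n^'n" and \<Gamma>0 :: "complex^'n^'m"
  assumes G0: "\<Gamma>0 ** B = mat 1"
    and G0min: "\<And>\<Gamma>. \<Gamma> ** B = mat 1 \<Longrightarrow> loewner_le (qR R \<Gamma>0) (qR R \<Gamma>)"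
    and pos: "pd (qR R \<Gamma>0)"
    and Rx: "R *v x = 0"
  shows "cadj B *v x = 0"
proof (rule ccontr)
  define w where "w = cadj B *v x"
  assume "cadj B *v x \<noteq> 0"
  then have wnz: "w \<noteq> 0" by (simp add: w_def)
  define c where "c = ci w w"
  have cnz: "c \<noteq> 0" using ci_self_pos[OF wnz] c_def by auto
  define d where "d = x - cadj \<Gamma>0 *v w"
  define e where "e = (1 / c) *s d"
  define \<Gamma> where "\<Gamma> = \<Gamma>0 + outer w e"
  have "cadj B *v d = w - (cadj (\<Gamma>0 ** B)) *v w"
    by (simp add: d_def w_def mv_diff_l cadj_mult matrix_vector_mul_assoc matrix_mul_assoc)
  then have Bd: "cadj B *v d = 0" by (simp add: G0)
  have Be: "cadj B *v e = 0" by (simp add: e_def mv_scale Bd)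
  have GB: "\<Gamma> ** B = mat 1"
    by (simp add: \<Gamma>_def mm_add_r outer_mult Be G0)
  have Gw: "cadj \<Gamma> *v w = x"
    using cnz by (simp add: \<Gamma>_def cadj_add mv_add_r cadj_outer_mv
        c_def[symmetric] e_def d_def)
  have "qform (qR R \<Gamma>) w = ci w (\<Gamma> *v (R *v (cadj \<Gamma> *v w)))"
    by (simp add: qform_ci qR_def matrix_vector_mul_assoc matrix_mul_assoc)
  also have "\<dots> = 0" by (simp add: Gw Rx)
  finally have q0: "qform (qR R \<Gamma>) w = 0" .
  have "psd (qR R \<Gamma> - qR R \<Gamma>0)" using G0min[OF GB] by (simp add: loewner_le_def)
  then have "Re (qform (qR R \<Gamma> - qR R \<Gamma>0) w) \<ge> 0" by (simp add: psd_def)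
  then have "Re (qform (qR R \<Gamma>0) w) \<le> 0" by (simp add: qform_diff q0)
  moreover have "Re (qform (qR R \<Gamma>0) w) > 0" using pos wnz by (simp add: pd_def)
  ultimately show False by simp
qed



lemma rank_lt:
  fixes M :: "'a::field^'c^'r"
  assumes y: "y \<noteq> 0" and z: "\<And>j. (\<Sum>i\<in>UNIV. y$i * M$i$j) = 0"
  shows "rank M < CARD('r)"
proof (rule ccontr)
  assume "\<not> rank M < CARD('r)"
  then have ge: "vec.dim (rows M) \<ge> CARD('r)" by (simp add: row_rank_def_gen)
  define rw where "rw = (\<lambda>i. row i M)"
  have S: "rows M = range rw" by (auto simp: rows_def rw_def)
  have fin: "finite (rows M)" by (simp add: S)
  have "vec.dim (rows M) \<le> card (rows M)"
    by (rule vec.dim_le_card[OF vec.span_superset fin])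
  moreover have "card (rows M) \<le> CARD('r)" unfolding S by (rule card_image_le) simp
  ultimately have c1: "card (rows M) = CARD('r)" and c2: "card (rows M) = vec.dim (rows M)"
    using ge by linarith+
  have inj: "inj rw" using c1 S by (intro eq_card_imp_inj_on) auto
  have ind: "vec.independent (rows M)"
    using vec.card_eq_dim[OF subset_refl c2 fin] vec.span_superset by blast
  define cf where "cf = (\<lambda>v. y $ (inv rw v))"
  have "(\<Sum>v\<in>rows M. cf v *s v) = (\<Sum>i\<in>UNIV. cf (rw i) *s rw i)"
    unfolding S by (rule sum.reindex[OF inj, unfolded o_def])
  also have "\<dots> = (\<Sum>i\<in>UNIV. y $ i *s rw i)" by (simp add: cf_def inv_f_f[OF inj])
  also have "\<dots> = 0"
    using z by (simp add: vec_eq_iff rw_def row_def sum_component)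
  finally have "\<forall>v\<in>rows M. cf v = 0"
    using ind unfolding vec.independent_explicit by blast
  then have "\<forall>i. y $ i = 0" using S by (auto simp: cf_def inv_f_f[OF inj])
  then show False using y by (simp add: vec_eq_iff)
qed


lemma mpow_Suc: "mpow A (Suc p) = A ** mpow A p"
  by (simp add: mpow_def)

theorem proposition2:
  fixes A :: "complex^'n^'n" and B :: "complex^'m^'n" and R :: "complex^'n^'n"
    and \<Gamma>0 :: "complex^'n^'m" and \<Omega> :: "complex^'m^'m"
  assumes rankB: "rank B = CARD('m)"
    and reach: "reachable A B"
    and stable: "\<And>c v. v \<noteq> 0 \<Longrightarrow> A *v v = c *s v \<Longrightarrow> norm c < 1"
    and Rpsd: "psd R"
    and lyap: "\<exists>H :: complex^'n^'m. R - A ** R ** cadj A = B ** H + cadj H ** cadj B"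
    and G0: "\<Gamma>0 ** B = mat 1"
    and G0min: "\<And>\<Gamma>. \<Gamma> ** B = mat 1 \<Longrightarrow> loewner_le (qR R \<Gamma>0) (qR R \<Gamma>)"
    and Omega: "\<Omega> = qR R \<Gamma>0"
    and Omega_pos: "pd \<Omega>"
  shows "pd R"
proof -
  obtain H :: "complex^'n^'m" where H: "R - A ** R ** cadj A = B ** H + cadj H ** cadj B"
    using lyap by blast
  have pos: "pd (qR R \<Gamma>0)" using Omega Omega_pos by simp
  have kB: "cadj B *v x = 0" if "R *v x = 0" for x
    using ker_B[OF G0 G0min pos that] by blast
  have step: "R *v (cadj A *v x) = 0" if Rx: "R *v x = 0" for x
  proof -
    have Bx: "cadj B *v x = 0" using kB Rx by blast
    have e1: "ci x (A *v (R *v (cadj A *v x))) = ci (cadj A *v x) (R *v (cadj A *v x))"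
      by (rule ci_adj)
    have "qform (R - A ** R ** cadj A) x = ci x (R *v x) - ci x (A *v (R *v (cadj A *v x)))"
      by (simp add: qform_ci mv_diff_r ci_diff_right matrix_vector_mul_assoc[symmetric])
    also have "\<dots> = - ci (cadj A *v x) (R *v (cadj A *v x))" by (simp add: Rx e1)
    finally have l: "qform (R - A ** R ** cadj A) x = - ci (cadj A *v x) (R *v (cadj A *v x))" .
    have e2: "ci x (B *v (H *v x)) = ci (cadj B *v x) (H *v x)" by (rule ci_adj)
    have "qform (B ** H + cadj H ** cadj B) x = ci x (B *v (H *v x)) + ci x (cadj H *v (cadj B *v x))"
      by (simp add: qform_ci mv_add_r ci_add_right matrix_vector_mul_assoc[symmetric])
    also have "\<dots> = 0" by (simp add: e2 Bx)
    finally have r: "qform (B ** H + cadj H ** cadj B) x = 0" .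
    have "qform R (cadj A *v x) = 0" using l r H by (simp add: qform_ci)
    then show ?thesis using psd_kernel[OF Rpsd] by simp
  qed
  have iter: "R *v (cadj (mpow A p) *v x) = 0" if "R *v x = 0" for p x
    using that
  proof (induction p arbitrary: x)
    case 0
    then show ?case by (simp add: mpow_def)
  next
    case (Suc p)
    have "cadj (mpow A (Suc p)) *v x = cadj (mpow A p) *v (cadj A *v x)"
      by (simp add: mpow_Suc cadj_mult matrix_vector_mul_assoc)
    then show ?case using Suc.IH[OF step[OF Suc.prems]] by simp
  qed
  show "pd R"
    unfolding pd_def
  proof (intro conjI allI impI)
    show "hermitian R" using Rpsd by (simp add: psd_def)
    fix x :: "complex^'n"
    assume xnz: "x \<noteq> 0"
    show "Re (qform R x) > 0"
    proof (rule ccontr)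
      assume "\<not> Re (qform R x) > 0"
      moreover have "Re (qform R x) \<ge> 0" using Rpsd by (simp add: psd_def)
      ultimately have "Re (qform R x) = 0" by simp
      then have Rx: "R *v x = 0" using psd_kernel[OF Rpsd] by blast
      have z: "cadj (mpow A p ** B) *v x = 0" for p
        using kB[OF iter[OF Rx, of p]] by (simp add: cadj_mult matrix_vector_mul_assoc)
      define y where "y = (\<chi> i. cnj (x $ i))"
      have ynz: "y \<noteq> 0" using xnz by (simp add: y_def vec_eq_iff)
      have "(\<Sum>i\<in>UNIV. y$i * ctrb A B $ i $ jk) = 0" for jk
      proof -
        have "(\<Sum>i\<in>UNIV. y$i * ctrb A B $ i $ jk)
            = cnj ((cadj (mpow A (idx (snd jk)) ** B) *v x) $ fst jk)"
          by (simp add: y_def ctrb_def cadj_def matrix_vector_mult_def mult.commute)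
        then show ?thesis by (simp add: z)
      qed
      then have "rank (ctrb A B) < CARD('n)" by (rule rank_lt[OF ynz])
      then show False using reach by (simp add: reachable_def)
    qed
  qed
qed

end
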